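(* Let $A$ be a regular vertex of a phylogenetic quiver $\mathcal O$, let $B$ be a vertex of the clade $\mathcal O_A$, and set $m=h(A)$, $n=h(B)$ (so $n\ge m$). If $p^{n-m}([B])\neq[A]$, then $B$ is a phylogenetic vertex of $\mathcal O_A$ and $h_A(B)=n-m+1$.
   Context: A quiver consists of a class of vertices and, for each ordered pair of vertices $(A,B)$, a set of edges $A\to B$ (loops and multiple edges allowed). An evolution of length $m\ge 0$ is a sequence $A_0\leftarrow A_1\leftarrow\cdots\leftarrow A_m$ of vertices together with edges $A_k\to A_{k-1}$ ($1\le k\le m$); $A_0$ is its initial and $A_m$ its terminal vertex. Write $A\le B$ ($A$ is an ancestor of $B$, $B$ a descendant of $A$) if there is an evolution with initial vertex $A$ and terminal vertex $B$; $A,B$ are isotypic ($A\sim B$) if $A\le B$ and $B\le A$. A vertex $A$ is primitive if every ancestor of $A$ is isotypic to $A$. A full evolution for $X$ is an evolution with primitive initial vertex and terminal vertex $X$. The height $h(X)$ is the smallest length of a full evolution for $X$ ($\infty$ if none). An evolution $\alpha=(A_0\leftarrow\cdots\leftarrow A_m)$ embeds in $\beta=(B_0\leftarrow\cdots\leftarrow B_n)$ if $m\le n$ and there are $0\le r_0<\cdots<r_m\le n$ with $A_k\sim B_{r_k}$. A universal evolution for $X$ is a full evolution for $X$ embedding in every full evolution for $X$; $X$ is phylogenetic if one exists. A quiver is monotonous if $h(A)\ge h(B)$ for every edge $A\to B$; small if its isotypy classes form a set; phylogenetic if small, monotonous, and all vertices phylogenetic. For a phylogenetic quiver, $[A]$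 denotes the isotypy class of $A$, $\mathcal O_m$ the set of isotypy classes of vertices of height $m$, and for $m\ge1$ the parental map $p:\mathcal O_m\to\mathcal O_{m-1}$ is $p([A])=[A_{m-1}]$ where $A_0\leftarrow\cdots\leftarrow A_{m-1}\leftarrow A_m=A$ is any universal evolution for $A$ (well defined); $p^0$ is the identity. The clade $\mathcal O_A$ is the quiver formed by all descendants of $A$ in $\mathcal O$ and all edges between them; $h_A$ denotes height computed in $\mathcal O_A$, and phylogeneticity in $\mathcal O_A$ is likewise computed within $\mathcal O_A$. A vertex $A$ is regular if for every $B$ in $\mathcal O_A$ with $h(B)=h(A)$ there is an edge $B\to A$ in $\mathcal O$. *)

theory Defs
  imports Main "HOL-Library.Extended_Nat"
begin

text \<open>A quiver is given by a vertex set V and, for each ordered pair (A,B), the set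
  E A B of edges from A to B.  An evolution A_0 <- A_1 <- ... <- A_m is represented by
  the vertex list as = [A_0,...,A_m] and the edge list es = [e_1,...,e_m] where
  e_k is an edge A_k -> A_(k-1) (stored at index k-1).\<close>

definition evolution :: "'v set \<Rightarrow> ('v \<Rightarrow> 'v \<Rightarrow> 'e set) \<Rightarrow> 'v list \<Rightarrow> 'e list \<Rightarrow> bool" where
  "evolution V E as es \<longleftrightarrow> as \<noteq> [] \<and> set as \<subseteq> V \<and> length es + 1 = length as \<and>
     (\<forall>k<length es. es ! k \<in> E (as ! (k+1)) (as ! k))"

definition ancestor :: "'v set \<Rightarrow> ('v \<Rightarrow> 'v \<Rightarrow> 'e set) \<Rightarrow> 'v \<Rightarrow> 'v \<Rightarrow> bool" where
  "ancestor V E A B \<longleftrightarrow> (\<exists>as es. evolution V E as es \<and> hd as = A \<and> last as = B)"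

definition isotypic :: "'v set \<Rightarrow> ('v \<Rightarrow> 'v \<Rightarrow> 'e set) \<Rightarrow> 'v \<Rightarrow> 'v \<Rightarrow> bool" where
  "isotypic V E A B \<longleftrightarrow> ancestor V E A B \<and> ancestor V E B A"

definition primitive :: "'v set \<Rightarrow> ('v \<Rightarrow> 'v \<Rightarrow> 'e set) \<Rightarrow> 'v \<Rightarrow> bool" where
  "primitive V E A \<longleftrightarrow> A \<in> V \<and> (\<forall>B. ancestor V E B A \<longrightarrow> isotypic V E B A)"

definition full_evolution :: "'v set \<Rightarrow> ('v \<Rightarrow> 'v \<Rightarrow> 'e set) \<Rightarrow> 'v list \<Rightarrow> 'e list \<Rightarrow> 'v \<Rightarrow> bool" where
  "full_evolution V E as es X \<longleftrightarrow> evolution V E as es \<and> primitive V E (hd as) \<and> last as = X"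

text \<open>Height: least length of a full evolution; infinity if there is none (Inf {} = \<infinity>).\<close>
definition height :: "'v set \<Rightarrow> ('v \<Rightarrow> 'v \<Rightarrow> 'e set) \<Rightarrow> 'v \<Rightarrow> enat" where
  "height V E X = Inf ((\<lambda>(as, es). enat (length es)) ` {(as, es). full_evolution V E as es X})"

definition embeds :: "'v set \<Rightarrow> ('v \<Rightarrow> 'v \<Rightarrow> 'e set) \<Rightarrow> 'v list \<Rightarrow> 'v list \<Rightarrow> bool" where
  "embeds V E as bs \<longleftrightarrow> length as \<le> length bs \<and>
     (\<exists>r. strict_mono_on {..<length as} r \<and>
          (\<forall>k<length as. r k < length bs \<and> isotypic V E (as ! k) (bs ! r k)))"

definition universal_evolution :: "'v set \<Rightarrow> ('v \<Rightarrow> 'v \<Rightarrow> 'e set) \<Rightarrow> 'v list \<Rightarrow> 'e list \<Rightarrow> 'v \<Rightarrow> bool" where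
  "universal_evolution V E as es X \<longleftrightarrow> full_evolution V E as es X \<and>
     (\<forall>bs fs. full_evolution V E bs fs X \<longrightarrow> embeds V E as bs)"

definition phylogenetic_vertex :: "'v set \<Rightarrow> ('v \<Rightarrow> 'v \<Rightarrow> 'e set) \<Rightarrow> 'v \<Rightarrow> bool" where
  "phylogenetic_vertex V E X \<longleftrightarrow> (\<exists>as es. universal_evolution V E as es X)"

definition monotonous :: "'v set \<Rightarrow> ('v \<Rightarrow> 'v \<Rightarrow> 'e set) \<Rightarrow> bool" where
  "monotonous V E \<longleftrightarrow> (\<forall>A\<in>V. \<forall>B\<in>V. E A B \<noteq> {} \<longrightarrow> height V E B \<le> height V E A)"

text \<open>Smallness (isotypy classes form a set) is automatic in HOL.\<close>
definition phylogenetic_quiver :: "'v set \<Rightarrow> ('v \<Rightarrow> 'v \<Rightarrow> 'e set) \<Rightarrow> bool" where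
  "phylogenetic_quiver V E \<longleftrightarrow> monotonous V E \<and> (\<forall>X\<in>V. phylogenetic_vertex V E X)"

definition iso_class :: "'v set \<Rightarrow> ('v \<Rightarrow> 'v \<Rightarrow> 'e set) \<Rightarrow> 'v \<Rightarrow> 'v set" where
  "iso_class V E A = {B\<in>V. isotypic V E A B}"

text \<open>Parental map: the class of the penultimate vertex A_(m-1) of a universal evolution
  of some representative (well defined by the paper).\<close>
definition parent :: "'v set \<Rightarrow> ('v \<Rightarrow> 'v \<Rightarrow> 'e set) \<Rightarrow> 'v set \<Rightarrow> 'v set" where
  "parent V E c = iso_class V E
     (SOME P. \<exists>A\<in>c. \<exists>as es. universal_evolution V E as es A \<and> P = as ! (length es - 1))"

text \<open>Vertex set of the clade O_A; the clade quiver is (clade V E A, E) (edges between its vertices).\<close>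
definition clade :: "'v set \<Rightarrow> ('v \<Rightarrow> 'v \<Rightarrow> 'e set) \<Rightarrow> 'v \<Rightarrow> 'v set" where
  "clade V E A = {B\<in>V. ancestor V E A B}"

definition regular :: "'v set \<Rightarrow> ('v \<Rightarrow> 'v \<Rightarrow> 'e set) \<Rightarrow> 'v \<Rightarrow> bool" where
  "regular V E A \<longleftrightarrow> A \<in> V \<and>
     (\<forall>B\<in>clade V E A. height V E B = height V E A \<longrightarrow> E B A \<noteq> {})"

end

theory Submission
  imports Defs
begin

definition pth :: "'v set \<Rightarrow> ('v \<Rightarrow> 'v \<Rightarrow> 'e set) \<Rightarrow> 'v list \<Rightarrow> bool" where
  "pth V E xs \<longleftrightarrow> xs \<noteq> [] \<and> set xs \<subseteq> V \<and> (\<forall>k. Suc k < length xs \<longrightarrow> E (xs!Suc k) (xs!k) \<noteq> {})"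

definition fev :: "'v set \<Rightarrow> ('v \<Rightarrow> 'v \<Rightarrow> 'e set) \<Rightarrow> 'v list \<Rightarrow> 'v \<Rightarrow> bool" where
  "fev V E xs X \<longleftrightarrow> pth V E xs \<and> primitive V E (hd xs) \<and> last xs = X"

lemma evolution_pth: assumes "evolution V E as es" shows "pth V E as \<and> length es = length as - 1"
proof -
  have a: "as \<noteq> []" "set as \<subseteq> V" "length es + 1 = length as" "\<And>k. k<length es \<Longrightarrow> es ! k \<in> E (as ! (k + 1)) (as ! k)"
    using assms unfolding evolution_def by auto
  have "E (as ! Suc k) (as ! k) \<noteq> {}" if "Suc k < length as" for k
    using a(4)[of k] a(3) that by auto
  then show ?thesis using a unfolding pth_def by auto
qed

lemma pth_evolution: assumes "pth V E xs" shows "\<exists>es. evolution V E xs es \<and> length es = length xs - 1"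
proof -
  define es where "es = map (\<lambda>k. SOME e. e \<in> E (xs!Suc k) (xs!k)) [0..<length xs - 1]"
  have "evolution V E xs es" unfolding evolution_def es_def using assms unfolding pth_def
    by (auto simp: some_in_eq)
  thus ?thesis unfolding es_def by auto
qed

lemma ancestor_pth: "ancestor V E X Y \<longleftrightarrow> (\<exists>xs. pth V E xs \<and> hd xs = X \<and> last xs = Y)"
  unfolding ancestor_def using evolution_pth pth_evolution by metis

lemma full_fev: "full_evolution V E as es X \<Longrightarrow> fev V E as X \<and> length es = length as - 1"
  unfolding full_evolution_def fev_def using evolution_pth by blast

lemma fev_full: "fev V E xs X \<Longrightarrow> \<exists>es. full_evolution V E xs es X \<and> length es = length xs - 1"
  unfolding full_evolution_def fev_def using pth_evolution by blast

lemma height_le: "fev V E xs X \<Longrightarrow> height V E X \<le> enat (length xs - 1)"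
proof -
  assume "fev V E xs X"
  then obtain es where "full_evolution V E xs es X" "length es = length xs - 1" using fev_full[of V E xs X] by blast
  then show ?thesis unfolding height_def by (intro Inf_lower) force
qed

lemma height_ge: "(\<And>xs. fev V E xs X \<Longrightarrow> j \<le> enat (length xs - 1)) \<Longrightarrow> j \<le> height V E X"
  unfolding height_def by (intro Inf_greatest) (auto dest!: full_fev)

lemma height_ex: assumes "height V E X = enat k" shows "\<exists>xs. fev V E xs X \<and> length xs = Suc k"
proof -
  let ?S = "(\<lambda>(as, es). enat (length es)) ` {(as, es). full_evolution V E as es X}"
  have ne: "?S \<noteq> {}" proof assume "?S = {}" then have "height V E X = \<infinity>" unfolding height_def by (simp add: Inf_enat_def)
    then show False using assms by simp qed
  then have "Inf ?S \<in> ?S" unfolding Inf_enat_def by (auto intro: LeastI)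
  then obtain as es where "full_evolution V E as es X" "enat (length es) = enat k"
    using assms unfolding height_def by auto
  then show ?thesis using full_fev by (metis Suc_pred' enat.inject evolution_def full_evolution_def length_greater_0_conv)
qed

lemma pth_nth: "pth V E xs \<Longrightarrow> i < length xs \<Longrightarrow> xs!i \<in> V"
  unfolding pth_def by auto

lemma pth_take: "pth V E xs \<Longrightarrow> i < length xs \<Longrightarrow> pth V E (take (Suc i) xs) \<and> hd (take (Suc i) xs) = hd xs \<and> last (take (Suc i) xs) = xs!i"
  unfolding pth_def by (auto simp: hd_conv_nth last_conv_nth dest: in_set_takeD)

lemma pth_drop: "pth V E xs \<Longrightarrow> i < length xs \<Longrightarrow> pth V E (drop i xs) \<and> hd (drop i xs) = xs!i \<and> last (drop i xs) = last xs"
  unfolding pth_def by (auto simp: hd_drop_conv_nth dest: in_set_dropD)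

lemma pth_Cons: "pth V E xs \<Longrightarrow> a \<in> V \<Longrightarrow> E (hd xs) a \<noteq> {} \<Longrightarrow> pth V E (a # xs)"
  unfolding pth_def by (auto simp: hd_conv_nth nth_Cons split: nat.splits)

lemma app_nth1: "i < length xs \<Longrightarrow> (xs @ tl ys) ! i = xs ! i"
  by (simp add: nth_append)

lemma app_nth2: assumes "xs \<noteq> []" "ys \<noteq> []" "last xs = hd ys" "length xs - 1 \<le> i" "i < length xs + length ys - 1"
  shows "(xs @ tl ys) ! i = ys ! (i - (length xs - 1))"
proof (cases "i < length xs")
  case True
  then have "i = length xs - 1" using assms by auto
  then show ?thesis using assms by (simp add: nth_append last_conv_nth hd_conv_nth)
next
  case False
  then have "(xs @ tl ys) ! i = tl ys ! (i - length xs)" by (simp add: nth_append)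
  also have "\<dots> = ys ! Suc (i - length xs)" using assms False by (simp add: nth_tl)
  also have "Suc (i - length xs) = i - (length xs - 1)" using False assms(1) by (cases xs) auto
  finally show ?thesis .
qed
lemma pth_app: assumes "pth V E xs" "pth V E ys" "last xs = hd ys"
  shows "pth V E (xs @ tl ys) \<and> hd (xs @ tl ys) = hd xs \<and> last (xs @ tl ys) = last ys \<and> length (xs @ tl ys) = length xs + length ys - 1"
proof -
  have ne: "xs \<noteq> []" "ys \<noteq> []" using assms unfolding pth_def by auto
  have "set (xs @ tl ys) \<subseteq> V" using assms unfolding pth_def by (auto dest: list.set_sel(2)[rotated])
  moreover have "E ((xs @ tl ys)!Suc k) ((xs @ tl ys)!k) \<noteq> {}" if "Suc k < length (xs @ tl ys)" for k
  proof (cases "Suc k < length xs")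
    case True then show ?thesis using assms(1) by (simp add: app_nth1 pth_def)
  next
    case False
    then have "(xs @ tl ys)!Suc k = ys ! (Suc k - (length xs - 1))" "(xs @ tl ys)!k = ys ! (k - (length xs - 1))"
      using that ne assms False by (auto intro!: app_nth2[OF ne(1,2) assms(3)] simp del: One_nat_def)
    moreover have "Suc k - (length xs - 1) = Suc (k - (length xs - 1))" using False ne by (cases xs) auto
    ultimately show ?thesis using assms(2) that ne False unfolding pth_def by auto
  qed
  ultimately show ?thesis using ne assms by (auto simp: pth_def last_append) (cases ys; auto)+
qed


lemma pth_anc: assumes "pth V E xs" "i \<le> j" "j < length xs" shows "ancestor V E (xs!i) (xs!j)"
proof -
  have t: "pth V E (take (Suc j) xs)" "last (take (Suc j) xs) = xs!j" using pth_take[OF assms(1,3)] by auto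
  have "i < length (take (Suc j) xs)" using assms by auto
  from pth_drop[OF t(1) this] have "pth V E (drop i (take (Suc j) xs))" "hd (drop i (take (Suc j) xs)) = xs!i"
     "last (drop i (take (Suc j) xs)) = xs!j" using assms t by auto
  then show ?thesis unfolding ancestor_pth by blast
qed

lemma pth_hd: "pth V E xs \<Longrightarrow> hd xs = xs!0"
  unfolding pth_def by (simp add: hd_conv_nth)
lemma pth_last: "pth V E xs \<Longrightarrow> last xs = xs!(length xs - 1)"
  unfolding pth_def by (simp add: last_conv_nth)

lemma anc_hd_nth: "pth V E xs \<Longrightarrow> i < length xs \<Longrightarrow> ancestor V E (hd xs) (xs!i)"
  using pth_anc[of V E xs 0 i] pth_hd by fastforce
lemma anc_nth_last: "pth V E xs \<Longrightarrow> i < length xs \<Longrightarrow> ancestor V E (xs!i) (last xs)"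
  using pth_anc[of V E xs i "length xs - 1"] pth_last by fastforce

lemma anc_refl: "X \<in> V \<Longrightarrow> ancestor V E X X"
  unfolding ancestor_pth by (rule exI[of _ "[X]"]) (auto simp: pth_def)

lemma anc_V: "ancestor V E X Y \<Longrightarrow> X \<in> V \<and> Y \<in> V"
  unfolding ancestor_pth pth_def by (auto simp: hd_conv_nth last_conv_nth)

lemma anc_trans: "ancestor V E X Y \<Longrightarrow> ancestor V E Y Z \<Longrightarrow> ancestor V E X Z"
proof -
  assume "ancestor V E X Y" "ancestor V E Y Z"
  then obtain xs ys where "pth V E xs" "hd xs = X" "last xs = Y" "pth V E ys" "hd ys = Y" "last ys = Z"
    unfolding ancestor_pth by blast
  with pth_app[of V E xs ys] show ?thesis unfolding ancestor_pth by auto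
qed

lemma iso_refl: "X \<in> V \<Longrightarrow> isotypic V E X X" unfolding isotypic_def using anc_refl by fast
lemma iso_sym: "isotypic V E X Y \<Longrightarrow> isotypic V E Y X" unfolding isotypic_def by auto
lemma iso_trans: "isotypic V E X Y \<Longrightarrow> isotypic V E Y Z \<Longrightarrow> isotypic V E X Z"
  unfolding isotypic_def using anc_trans by fast
lemma iso_V: "isotypic V E X Y \<Longrightarrow> X \<in> V \<and> Y \<in> V" unfolding isotypic_def using anc_V by fast

lemma iso_class_eq: "isotypic V E X Y \<Longrightarrow> iso_class V E X = iso_class V E Y"
proof -
  assume a: "isotypic V E X Y"
  have "isotypic V E X Z \<longleftrightarrow> isotypic V E Y Z" for Z using a iso_sym iso_trans by meson
  then show ?thesis unfolding iso_class_def by simp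
qed

lemma iso_class_neq: "Y \<in> V \<Longrightarrow> iso_class V E X = iso_class V E Y \<Longrightarrow> isotypic V E X Y"
proof -
  assume a: "Y \<in> V" "iso_class V E X = iso_class V E Y"
  have "Y \<in> iso_class V E Y" unfolding iso_class_def using a(1) iso_refl[OF a(1)] by simp
  then have "Y \<in> iso_class V E X" using a(2) by simp
  then show ?thesis unfolding iso_class_def by simp
qed

lemma mono_height: assumes "monotonous V E" "ancestor V E X Y" shows "height V E X \<le> height V E Y"
proof -
  obtain xs where xs: "pth V E xs" "hd xs = X" "last xs = Y" using assms(2) unfolding ancestor_pth by blast
  have "i < length xs \<Longrightarrow> height V E (xs!0) \<le> height V E (xs!i)" for i
  proof (induction i)
    case 0 then show ?case by simp
  next
    case (Suc i)
    have "E (xs!Suc i) (xs!i) \<noteq> {}" using xs(1) Suc.prems unfolding pth_def by auto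
    moreover have "xs!i \<in> V" "xs!Suc i \<in> V" using pth_nth[OF xs(1)] Suc.prems by auto
    ultimately have "height V E (xs!i) \<le> height V E (xs!Suc i)"
      using assms(1) unfolding monotonous_def by blast
    moreover have "height V E (xs!0) \<le> height V E (xs!i)" using Suc by simp
    ultimately show ?case by (rule order_trans[rotated])
  qed
  moreover have "xs \<noteq> []" using xs(1) unfolding pth_def by blast
  ultimately have "height V E (xs!0) \<le> height V E (xs!(length xs - 1))" by simp
  moreover have "xs!0 = X" using xs(2) pth_hd[OF xs(1)] by simp
  moreover have "xs!(length xs - 1) = Y" using xs(3) pth_last[OF xs(1)] by simp
  ultimately show ?thesis by simp
qed

lemma iso_height: "monotonous V E \<Longrightarrow> isotypic V E X Y \<Longrightarrow> height V E X = height V E Y"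
proof -
  assume a: "monotonous V E" "isotypic V E X Y"
  then have "height V E X \<le> height V E Y" "height V E Y \<le> height V E X"
    using mono_height[OF a(1)] unfolding isotypic_def by auto
  then show ?thesis by (rule order_antisym)
qed

lemma fev_take: assumes "fev V E xs X" "i < length xs" shows "fev V E (take (Suc i) xs) (xs!i) \<and> length (take (Suc i) xs) = Suc i"
  using assms pth_take[OF _ assms(2)] unfolding fev_def by auto

lemma min_heights: assumes "fev V E xs X" "height V E X = enat (length xs - 1)" "i < length xs"
  shows "height V E (xs!i) = enat i"
proof -
  have le: "height V E (xs!i) \<le> enat i" using height_le[OF conjunct1[OF fev_take[OF assms(1,3)]]] assms(3) by (simp add: min_absorb2)
  show ?thesis
  proof (rule ccontr)
    assume "height V E (xs!i) \<noteq> enat i"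
    then obtain j where j: "height V E (xs!i) = enat j" "j < i" using le
      by (metis enat_ile order_le_less enat_ord_simps(2))
    obtain zs where zs: "fev V E zs (xs!i)" "length zs = Suc j" using height_ex[OF j(1)] by blast
    have dr: "pth V E (drop i xs)" "hd (drop i xs) = xs!i" "last (drop i xs) = last xs"
      using pth_drop[OF _ assms(3), of V E] assms(1) unfolding fev_def by auto
    have zp: "pth V E zs" "last zs = hd (drop i xs)" using zs dr unfolding fev_def by auto
    note ap = pth_app[OF zp(1) dr(1) zp(2)]
    have "fev V E (zs @ tl (drop i xs)) X" using ap zs dr assms(1) unfolding fev_def by auto
    from height_le[OF this] have h: "height V E X \<le> enat (length (zs @ tl (drop i xs)) - 1)" .
    have l: "length (zs @ tl (drop i xs)) = length zs + length (drop i xs) - 1" using ap by blast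
    have "length (zs @ tl (drop i xs)) - 1 < length xs - 1" unfolding l length_drop zs(2) using j(2) assms(3) by linarith
    moreover have "length xs - 1 \<le> length (zs @ tl (drop i xs)) - 1" using h unfolding assms(2) by simp
    ultimately show False by linarith
  qed
qed

lemma sm_ge: fixes r :: "nat \<Rightarrow> nat" assumes "strict_mono_on {..<L} r" "i \<le> j" "j < L" shows "r i + (j - i) \<le> r j"
  using assms(2,3)
proof (induction j)
  case 0 then show ?case by simp
next
  case (Suc j)
  show ?case
  proof (cases "i = Suc j")
    case True then show ?thesis by simp
  next
    case False
    then have "r i + (j - i) \<le> r j" using Suc by auto
    moreover have "r j < r (Suc j)" by (rule strict_mono_onD[OF assms(1)]) (use Suc.prems in auto)
    moreover have "i \<le> j" using False Suc.prems by simp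
    ultimately show ?thesis by arith
  qed
qed

lemma sm_ge0: fixes r :: "nat \<Rightarrow> nat" shows "strict_mono_on {..<L} r \<Longrightarrow> j < L \<Longrightarrow> j \<le> r j"
  using sm_ge[of L r 0 j] by auto

lemma univ_length: assumes "universal_evolution V E as es X" shows "height V E X = enat (length es)"
proof -
  have f: "full_evolution V E as es X" using assms unfolding universal_evolution_def by auto
  then have fa: "fev V E as X" "length es = length as - 1" using full_fev[OF f] by auto
  have le: "height V E X \<le> enat (length es)" using height_le[OF fa(1)] fa(2) by simp
  then obtain k where k: "height V E X = enat k" by (cases "height V E X") auto
  obtain zs where zs: "fev V E zs X" "length zs = Suc k" using height_ex[OF k] by blast
  obtain fs where "full_evolution V E zs fs X" using fev_full[OF zs(1)] by blast
  then have "embeds V E as zs" using assms unfolding universal_evolution_def by auto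
  then have "length as \<le> Suc k" using zs unfolding embeds_def by auto
  then have "length es \<le> k" using fa(2) by linarith
  moreover have "k \<le> length es" using le k by simp
  ultimately show ?thesis using k by simp
qed


lemma clade_sub: "clade V E A \<subseteq> V" unfolding clade_def by auto

lemma clade_anc: "X \<in> clade V E A \<Longrightarrow> ancestor V E A X" unfolding clade_def by auto

lemma clade_I: "ancestor V E A X \<Longrightarrow> X \<in> clade V E A" unfolding clade_def using anc_V by fast

lemma pth_clade: assumes "pth V E ys" "hd ys \<in> clade V E A" shows "pth (clade V E A) E ys"
proof -
  have "ys!i \<in> clade V E A" if "i < length ys" for i
    using clade_I[OF anc_trans[OF clade_anc[OF assms(2)] anc_hd_nth[OF assms(1) that]]] .
  then have "set ys \<subseteq> clade V E A" by (auto simp: in_set_conv_nth)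
  then show ?thesis using assms(1) unfolding pth_def by auto
qed

lemma pth_clade_V: "pth (clade V E A) E ys \<Longrightarrow> pth V E ys"
  unfolding pth_def using clade_sub by fast

lemma anc_clade: assumes "X \<in> clade V E A" "Y \<in> clade V E A"
  shows "ancestor (clade V E A) E X Y \<longleftrightarrow> ancestor V E X Y"
proof
  assume "ancestor (clade V E A) E X Y"
  then obtain ys where ys: "pth (clade V E A) E ys" "hd ys = X" "last ys = Y" unfolding ancestor_pth by blast
  have "pth V E ys" using pth_clade_V[OF ys(1)] .
  then show "ancestor V E X Y" unfolding ancestor_pth using ys(2,3) by blast
next
  assume "ancestor V E X Y"
  then obtain ys where ys: "pth V E ys" "hd ys = X" "last ys = Y" unfolding ancestor_pth by blast
  then have "pth (clade V E A) E ys" using pth_clade[OF ys(1)] assms(1) by simp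
  then show "ancestor (clade V E A) E X Y" unfolding ancestor_pth using ys by blast
qed

lemma iso_clade: assumes "X \<in> clade V E A" "Y \<in> clade V E A"
  shows "isotypic (clade V E A) E X Y \<longleftrightarrow> isotypic V E X Y"
  unfolding isotypic_def using anc_clade[OF assms] anc_clade[OF assms(2,1)] by simp

lemma iso_A_clade: "A \<in> V \<Longrightarrow> isotypic V E X A \<Longrightarrow> X \<in> clade V E A"
  unfolding isotypic_def using clade_I by fast

lemma A_clade: "A \<in> V \<Longrightarrow> A \<in> clade V E A" using clade_I anc_refl by fast

lemma prim_clade: assumes "A \<in> V"
  shows "primitive (clade V E A) E X \<longleftrightarrow> X \<in> clade V E A \<and> isotypic V E X A"
proof
  assume p: "primitive (clade V E A) E X"
  then have X: "X \<in> clade V E A" unfolding primitive_def by auto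
  have "ancestor (clade V E A) E A X" using anc_clade[OF A_clade[OF assms] X] clade_anc[OF X] by simp
  then have "isotypic (clade V E A) E A X" using p unfolding primitive_def by auto
  then have "isotypic V E A X" using iso_clade[OF A_clade[OF assms] X] by simp
  then show "X \<in> clade V E A \<and> isotypic V E X A" using X iso_sym by fast
next
  assume a: "X \<in> clade V E A \<and> isotypic V E X A"
  have "isotypic (clade V E A) E Y X" if "ancestor (clade V E A) E Y X" for Y
  proof -
    have Y: "Y \<in> clade V E A" using that unfolding ancestor_pth pth_def by (auto simp: hd_conv_nth)
    have "ancestor V E Y X" using that anc_clade[OF Y] a by simp
    moreover have "ancestor V E X Y" using anc_trans[of V E X A Y] a clade_anc[OF Y] unfolding isotypic_def by blast
    ultimately show ?thesis using iso_clade[OF Y] a unfolding isotypic_def by simp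
  qed
  then show "primitive (clade V E A) E X" using a unfolding primitive_def by auto
qed

lemma fev_clade: assumes "A \<in> V"
  shows "fev (clade V E A) E ys B \<longleftrightarrow> pth V E ys \<and> isotypic V E (hd ys) A \<and> last ys = B"
proof
  assume "fev (clade V E A) E ys B"
  then show "pth V E ys \<and> isotypic V E (hd ys) A \<and> last ys = B"
    unfolding fev_def prim_clade[OF assms] using pth_clade_V by fast
next
  assume a: "pth V E ys \<and> isotypic V E (hd ys) A \<and> last ys = B"
  then have "hd ys \<in> clade V E A" using iso_A_clade[OF assms] by fast
  then show "fev (clade V E A) E ys B" unfolding fev_def prim_clade[OF assms] using pth_clade a by fast
qed


lemma parent_lemma:
  assumes pq: "phylogenetic_quiver V E" and X: "X \<in> V" and hX: "height V E X = enat k" and k: "1 \<le> k"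
    and vs: "fev V E vs X" "length vs = Suc k"
  shows "parent V E (iso_class V E X) = iso_class V E (vs!(k-1))"
proof -
  have mono: "monotonous V E" using pq unfolding phylogenetic_quiver_def by auto
  define Q where "Q P \<longleftrightarrow> (\<exists>A\<in>iso_class V E X. \<exists>as es. universal_evolution V E as es A \<and> P = as ! (length es - 1))" for P
  have "phylogenetic_vertex V E X" using pq X unfolding phylogenetic_quiver_def by auto
  then obtain as0 es0 where "universal_evolution V E as0 es0 X" unfolding phylogenetic_vertex_def by blast
  moreover have "X \<in> iso_class V E X" using X iso_refl unfolding iso_class_def by fast
  ultimately have "Q (as0 ! (length es0 - 1))" unfolding Q_def by blast
  then have "Q (SOME P. Q P)" by (rule someI)
  then obtain X' as es where X': "X' \<in> iso_class V E X" and u: "universal_evolution V E as es X'"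
    and P: "(SOME P. Q P) = as ! (length es - 1)" unfolding Q_def by blast
  have "parent V E (iso_class V E X) = iso_class V E (SOME P. Q P)" unfolding parent_def Q_def by simp
  then have par: "parent V E (iso_class V E X) = iso_class V E (as ! (length es - 1))" using P by simp
  have iXX': "isotypic V E X X'" using X' unfolding iso_class_def by simp
  have hX': "height V E X' = enat k" using iso_height[OF mono iXX'] hX by simp
  have les: "length es = k" using univ_length[OF u] hX' by simp
  have "full_evolution V E as es X'" using u unfolding universal_evolution_def by blast
  note fa = full_fev[OF this, THEN conjunct1] full_fev[OF this, THEN conjunct2]
  have las: "length as = Suc k" using fa(2) les fa(1) unfolding fev_def pth_def by (cases as) auto
  have has: "height V E (as!(k-1)) = enat (k-1)"
    using min_heights[OF fa(1)] hX' las k by simp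
  obtain ps where ps: "pth V E ps" "hd ps = X" "last ps = X'" using iXX' unfolding isotypic_def ancestor_pth by blast
  have vsp: "pth V E vs" "last vs = X" "primitive V E (hd vs)" using vs unfolding fev_def by auto
  define W where "W = vs @ tl ps"
  have ap: "pth V E W" "hd W = hd vs" "last W = X'" "length W = length vs + length ps - 1"
    using pth_app[OF vsp(1) ps(1)] vsp ps unfolding W_def by auto
  have "fev V E W X'" using ap vsp unfolding fev_def by simp
  then obtain fsW where "full_evolution V E W fsW X'" using fev_full[of V E W X'] by blast
  then have "embeds V E as W" using u unfolding universal_evolution_def by blast
  then obtain r where sm: "strict_mono_on {..<length as} r"
    and rr: "\<And>j. j < length as \<Longrightarrow> r j < length W \<and> isotypic V E (as ! j) (W ! r j)"
    unfolding embeds_def by blast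
  have kl: "k - 1 < length as" using las by simp
  have rge: "k - 1 \<le> r (k-1)" using sm_ge0[OF sm kl] .
  have rlt: "r (k-1) < k"
  proof (rule ccontr)
    assume "\<not> r (k-1) < k"
    then have kr: "length vs - 1 \<le> r (k-1)" using vs(2) by simp
    have rW: "r (k-1) < length vs + length ps - 1" using rr[OF kl] ap(4) by simp
    have vne: "vs \<noteq> []" "ps \<noteq> []" using vsp ps unfolding pth_def by auto
    have "W ! r (k-1) = ps ! (r (k-1) - (length vs - 1))"
      unfolding W_def by (rule app_nth2[OF vne _ kr rW]) (simp add: vsp(2) ps(2))
    moreover have "r (k-1) - (length vs - 1) < length ps" using rW kr by linarith
    ultimately have "ancestor V E X (W ! r (k-1))" using anc_hd_nth[OF ps(1)] ps(2) by metis
    then have "height V E X \<le> height V E (W ! r (k-1))" by (rule mono_height[OF mono])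
    also have "\<dots> = height V E (as!(k-1))" using iso_height[OF mono] rr[OF kl] by (metis iso_sym)
    finally show False using hX has k by simp
  qed
  have "r (k-1) = k-1" using rge rlt by simp
  then have "isotypic V E (as!(k-1)) (vs!(k-1))" using rr[OF kl] app_nth1[of "k-1" vs] vs(2) unfolding W_def by simp
  then show ?thesis using par les iso_class_eq by metis
qed


lemma parent_iter:
  assumes pq: "phylogenetic_quiver V E" and fu: "fev V E us B" and lus: "length us = Suc n"
    and hB: "height V E B = enat n" and j: "j \<le> n"
  shows "(parent V E ^^ j) (iso_class V E B) = iso_class V E (us!(n-j))"
  using j
proof (induction j)
  case 0
  have "us!n = B" using fu lus pth_last unfolding fev_def by fastforce
  then show ?case by simp
next
  case (Suc j)
  have IH: "(parent V E ^^ j) (iso_class V E B) = iso_class V E (us!(n-j))" using Suc by simp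
  have lt: "n - j < length us" using lus by simp
  have h: "height V E (us!(n-j)) = enat (n-j)" using min_heights[OF fu _ lt] hB lus by simp
  have X: "us!(n-j) \<in> V" using pth_nth[OF _ lt] fu unfolding fev_def by blast
  have ft: "fev V E (take (Suc (n-j)) us) (us!(n-j))" "length (take (Suc (n-j)) us) = Suc (n-j)"
    using fev_take[OF fu lt] by auto
  have "parent V E (iso_class V E (us!(n-j))) = iso_class V E (take (Suc (n-j)) us ! (n-j-1))"
    by (rule parent_lemma[OF pq X h _ ft]) (use Suc.prems in simp)
  moreover have "take (Suc (n-j)) us ! (n-j-1) = us ! (n - Suc j)" using Suc.prems by simp
  ultimately show ?case using IH by simp
qed

theorem lemma9p6:
  fixes V :: "'v set" and E :: "'v \<Rightarrow> 'v \<Rightarrow> 'e set" and A B :: 'v and m n :: nat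
  assumes "phylogenetic_quiver V E"
    and "regular V E A"
    and "B \<in> clade V E A"
    and "height V E A = enat m"
    and "height V E B = enat n"
    and "(parent V E ^^ (n - m)) (iso_class V E B) \<noteq> iso_class V E A"
  shows "phylogenetic_vertex (clade V E A) E B \<and> height (clade V E A) E B = enat (n - m + 1)"
proof -
  have mono: "monotonous V E" and phv: "\<And>X. X \<in> V \<Longrightarrow> phylogenetic_vertex V E X"
    using assms(1) unfolding phylogenetic_quiver_def by auto
  have AV: "A \<in> V" and reg: "\<And>Y. Y \<in> clade V E A \<Longrightarrow> height V E Y = height V E A \<Longrightarrow> E Y A \<noteq> {}"
    using assms(2) unfolding regular_def by auto
  have BV: "B \<in> V" and AB: "ancestor V E A B" using assms(3) unfolding clade_def by auto
  have mn: "m \<le> n" using mono_height[OF mono AB] assms(4,5) by simp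
  obtain us es where u: "universal_evolution V E us es B" using phv[OF BV] unfolding phylogenetic_vertex_def by blast
  have les: "length es = n" using univ_length[OF u] assms(5) by simp
  have "full_evolution V E us es B" using u unfolding universal_evolution_def by blast
  note fu = full_fev[OF this, THEN conjunct1] full_fev[OF this, THEN conjunct2]
  have lus: "length us = Suc n" using fu les unfolding fev_def pth_def by (cases us) auto
  have hus: "\<And>i. i < Suc n \<Longrightarrow> height V E (us!i) = enat i" using min_heights[OF fu(1)] assms(5) lus by simp
  have usp: "pth V E us" "last us = B" using fu(1) unfolding fev_def by auto
  have "(parent V E ^^ (n-m)) (iso_class V E B) = iso_class V E (us!(n-(n-m)))"
    using parent_iter[OF assms(1) fu(1) lus assms(5)] by simp
  then have "(parent V E ^^ (n-m)) (iso_class V E B) = iso_class V E (us!m)" using mn by simp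
  then have nis: "\<not> isotypic V E (us!m) A" using assms(6) iso_class_eq by metis
  have core: "\<exists>r. (\<forall>i j. i < j \<longrightarrow> j \<le> n \<longrightarrow> r i < r j) \<and> m < r m \<and> r m + (n - m) \<le> r n \<and> r n < m + length ys \<and>
      (\<forall>i. m \<le> i \<longrightarrow> i \<le> n \<longrightarrow> isotypic V E (us!i) (ys!(r i - m))) \<and> us!m \<in> clade V E A"
    if ys: "pth V E ys" "isotypic V E (hd ys) A" "last ys = B" for ys
  proof -
    have hA': "height V E (hd ys) = enat m" using iso_height[OF mono ys(2)] assms(4) by simp
    obtain ws where ws: "fev V E ws (hd ys)" "length ws = Suc m" using height_ex[OF hA'] by blast
    have wsp: "pth V E ws" "last ws = hd ys" "primitive V E (hd ws)" using ws unfolding fev_def by auto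
    define W where "W = ws @ tl ys"
    have ap: "pth V E W" "hd W = hd ws" "last W = B" "length W = length ws + length ys - 1"
      using pth_app[OF wsp(1) ys(1) wsp(2)] ys unfolding W_def by auto
    have "fev V E W B" using ap wsp unfolding fev_def by simp
    then obtain fsW where "full_evolution V E W fsW B" using fev_full[of V E W B] by blast
    then have "embeds V E us W" using u unfolding universal_evolution_def by blast
    then obtain r where sm: "strict_mono_on {..<length us} r"
      and rr: "\<And>j. j < length us \<Longrightarrow> r j < length W \<and> isotypic V E (us ! j) (W ! r j)"
      unfolding embeds_def by blast
    have yne: "ws \<noteq> []" "ys \<noteq> []" using wsp ys unfolding pth_def by auto
    have rW: "W ! r i = ys ! (r i - m) \<and> r i - m < length ys" if "m \<le> i" "i \<le> n" for i
    proof -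
      have il: "i < length us" using that lus by simp
      have a: "length ws - 1 \<le> r i" using sm_ge0[OF sm il] that ws(2) by simp
      have b: "r i < length ws + length ys - 1" using rr[OF il] ap(4) by simp
      have "W ! r i = ys ! (r i - (length ws - 1))" unfolding W_def by (rule app_nth2[OF yne wsp(2) a b])
      then show ?thesis using ws(2) a b by auto
    qed
    have isr: "isotypic V E (us!i) (ys!(r i - m))" if "m \<le> i" "i \<le> n" for i
      using rr[of i] rW[OF that] that lus by simp
    have "ancestor V E A (hd ys)" using ys(2) unfolding isotypic_def by simp
    moreover have "ancestor V E (hd ys) (ys!(r m - m))" using anc_hd_nth[OF ys(1)] rW[OF le_refl mn] by simp
    moreover have "ancestor V E (ys!(r m - m)) (us!m)" using isr[OF le_refl mn] unfolding isotypic_def by simp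
    ultimately have usm: "us!m \<in> clade V E A" using anc_trans clade_I by metis
    have ml: "m < length us" using lus mn by simp
    have rmge: "m \<le> r m" using sm_ge0[OF sm ml] .
    have rmgt: "m < r m"
    proof (rule ccontr)
      assume "\<not> m < r m"
      then have "r m = m" using rmge by simp
      then have "isotypic V E (us!m) (hd ys)" using isr[OF le_refl mn] pth_hd[OF ys(1)] by simp
      then show False using nis ys(2) iso_trans by metis
    qed
    have smn: "r m + (n - m) \<le> r n" using sm_ge[OF sm mn] lus by simp
    have rn: "r n < m + length ys" using rr[of n] lus ap(4) ws(2) by simp
    have st: "\<forall>i j. i < j \<longrightarrow> j \<le> n \<longrightarrow> r i < r j"
      using strict_mono_onD[OF sm] lus by auto
    show ?thesis using st rmgt smn rn isr usm by blast
  qed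
  obtain ps where ps: "pth V E ps" "hd ps = A" "last ps = B" using AB unfolding ancestor_pth by blast
  have usm: "us!m \<in> clade V E A" using core[OF ps(1) _ ps(3)] ps(2) iso_refl[OF AV] by auto
  have hum: "height V E (us!m) = height V E A" using hus[of m] mn assms(4) by simp
  have edge: "E (us!m) A \<noteq> {}" using reg[OF usm hum] .
  define cs where "cs = A # drop m us"
  have ml: "m < length us" using lus mn by simp
  have dm: "pth V E (drop m us)" "hd (drop m us) = us!m" "last (drop m us) = B"
    using pth_drop[OF usp(1) ml] usp(2) by auto
  have csp: "pth V E cs" unfolding cs_def by (rule pth_Cons[OF dm(1) AV]) (simp add: dm(2) edge)
  have csl: "last cs = B" using dm(3) ml unfolding cs_def by simp
  have lcs: "length cs = n - m + 2" unfolding cs_def using lus mn by simp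
  have fcs: "fev (clade V E A) E cs B" unfolding fev_clade[OF AV] using csp csl iso_refl[OF AV] unfolding cs_def by simp
  have hup: "height (clade V E A) E B \<le> enat (n - m + 1)" using height_le[OF fcs] lcs by simp
  have hlo: "enat (n - m + 1) \<le> height (clade V E A) E B"
  proof (rule height_ge)
    fix ys assume "fev (clade V E A) E ys B"
    then have ys: "pth V E ys" "isotypic V E (hd ys) A" "last ys = B" unfolding fev_clade[OF AV] by auto
    from core[OF ys] obtain r where "m < r m" "r m + (n - m) \<le> r n" "r n < m + length ys" by blast
    then show "enat (n - m + 1) \<le> enat (length ys - 1)" by simp
  qed
  have univ: "universal_evolution (clade V E A) E cs esc B" if esc: "full_evolution (clade V E A) E cs esc B" for esc
    unfolding universal_evolution_def
  proof (intro conjI allI impI esc)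
    fix bs fs assume "full_evolution (clade V E A) E bs fs B"
    note fb = full_fev[OF this, THEN conjunct1]
    then have bsc: "pth (clade V E A) E bs" unfolding fev_def by simp
    have ys: "pth V E bs" "isotypic V E (hd bs) A" "last bs = B" using fb unfolding fev_clade[OF AV] by auto
    from core[OF ys] obtain r where st: "\<forall>i j. i < j \<longrightarrow> j \<le> n \<longrightarrow> r i < r j" and rm: "m < r m"
      and smn: "r m + (n - m) \<le> r n" and rn: "r n < m + length bs"
      and isr: "\<forall>i. m \<le> i \<longrightarrow> i \<le> n \<longrightarrow> isotypic V E (us!i) (bs!(r i - m))" by blast
    define g where "g k = (if k = 0 then 0 else r (m + k - 1) - m)" for k
    have rge: "r m \<le> r i" if "m \<le> i" "i \<le> n" for i proof (cases "m = i")
      case False then have "r m < r i" using st that by simp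
      then show ?thesis by simp
    qed simp
    have "strict_mono_on {..<length cs} g"
    proof (rule strict_mono_onI)
      fix x y assume xy: "x \<in> {..<length cs}" "y \<in> {..<length cs}" "x < y"
      then have yn: "m + y - 1 \<le> n" using lcs mn by simp
      show "g x < g y"
      proof (cases "x = 0")
        case True
        have "m \<le> m + y - 1" using xy True by simp
        then have "r m \<le> r (m + y - 1)" using rge yn by simp
        then show ?thesis using xy rm True unfolding g_def by simp
      next
        case False
        then have "r (m + x - 1) < r (m + y - 1)" using st xy yn by simp
        moreover have "m \<le> m + x - 1" "m + x - 1 \<le> n" using False xy yn by auto
        then have "m < r (m + x - 1)" using rge[of "m + x - 1"] rm by simp
        ultimately show ?thesis using False xy unfolding g_def by simp
      qed
    qed
    moreover have "g k < length bs \<and> isotypic (clade V E A) E (cs ! k) (bs ! g k)" if k: "k < length cs" for k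
    proof (cases "k = 0")
      case True
      have hb: "hd bs \<in> clade V E A" using iso_A_clade[OF AV ys(2)] .
      have "isotypic (clade V E A) E A (hd bs)" using iso_clade[OF A_clade[OF AV] hb] ys(2) iso_sym by metis
      then show ?thesis using True pth_hd[OF ys(1)] ys(1) unfolding g_def cs_def pth_def by simp
    next
      case False
      have kn: "m + k - 1 \<le> n" "m \<le> m + k - 1" using k lcs False mn by auto
      have "r (m + k - 1) \<le> r n"
      proof (cases "m + k - 1 = n")
        case False then have "r (m + k - 1) < r n" using st kn by simp
        then show ?thesis by simp
      qed simp
      then have gl: "g k < length bs" using rn False rm rge[OF kn(2,1)] unfolding g_def by simp
      have csk: "cs ! k = us ! (m + k - 1)" using False ml unfolding cs_def
        by (cases k) (auto simp: nth_drop)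
      have i1: "isotypic V E (cs ! k) (bs ! g k)" using isr kn csk False unfolding g_def by simp
      have "ancestor V E (us!m) (us!(m + k - 1))" using pth_anc[OF usp(1)] kn lus by simp
      then have c1: "cs ! k \<in> clade V E A" using csk clade_I anc_trans clade_anc[OF usm] by metis
      have c2: "bs ! g k \<in> clade V E A" using pth_nth[OF bsc gl] .
      show ?thesis using gl i1 iso_clade[OF c1 c2] by simp
    qed
    moreover have "length cs \<le> length bs" using lcs smn rn rm by simp
    ultimately show "embeds (clade V E A) E cs bs" unfolding embeds_def by blast
  qed
  obtain esc where "full_evolution (clade V E A) E cs esc B" using fev_full[OF fcs] by blast
  then have "phylogenetic_vertex (clade V E A) E B" using univ unfolding phylogenetic_vertex_def by blast
  moreover have "height (clade V E A) E B = enat (n - m + 1)" using hup hlo by (rule order_antisym)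
  ultimately show ?thesis by simp
qed

end
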